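(* Let $(\mathbb N,S)$ be the natural numbers with the unary successor function $S(n)=n+1$. For all $a,b,c,d\in\mathbb N$, $$(\mathbb N,S)\models_e a:b::c:d\iff a-b=c-d.$$
   Context: Equational fragment: for an $L$-structure $\mathfrak A$ and $a,b\in A$, the set of equational justifications is $\uparrow^e_{\mathfrak A}(a\to b)=\{s(x,y)=t(x,y): s,t\ L\text{-terms in variables among }x,y,\ \text{the formula } s=t \text{ is a c-formula},\ \mathfrak A\models s(a,b)=t(a,b)\}$, where a c-formula is one whose free variables are exactly $x,y$ and whose dependency graph (vertices: its variables; edge between two variables iff they occur in a common atomic subformula) is connected. Put $\uparrow^e_{\mathfrak A}(a\to b:\cdot\, c\to d)=\uparrow^e_{\mathfrak A}(a\to b)\cap\uparrow^e_{\mathfrak A}(c\to d)$. An equation is trivial iff it lies in $\uparrow^e_{\mathfrak A}(a\to b:\cdot\, c\to d)$ for all $a,b,c,d$; $\emptyset^e$ denotes the set of trivial ones. $\mathfrak A\models_e a\to b:\cdot\, c\to d$ iff either $\uparrow^e_{\mathfrak A}(a\to b)\cup\uparrow^e_{\mathfrak A}(c\to d)$ consists only of trivial equations, or $\uparrow^e_{\mathfrak A}(a\to b:\cdot\, c\to d)$ contains a non-trivial equation and for every $d'$, $\emptyset^e\subsetneq\uparrow^e(a\to b:\cdot\, c\to d)\subseteq\uparrow^e(a\to b:\cdot\, c\to d')$ implies $\emptyset^e\subsetneq\uparrow^e(a\to b:\cdot\, c\to d')\subseteq\uparrow^e(a\to b:\cdot\, c\to d)$. $\mathfrak A\models_e a:b::c:d$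 iff $\mathfrak A\models_e a\to b:\cdot\, c\to d$, $b\to a:\cdot\, d\to c$, $c\to d:\cdot\, a\to b$ and $d\to c:\cdot\, b\to a$. Here $a-b$ denotes integer subtraction. *)

theory Defs
  imports Main
begin

datatype var = VX | VY

datatype trm = V var | S trm

fun eval :: "(var \<Rightarrow> nat) \<Rightarrow> trm \<Rightarrow> nat" where
  "eval \<rho> (V v) = \<rho> v"
| "eval \<rho> (S t) = Suc (eval \<rho> t)"

fun vars :: "trm \<Rightarrow> var set" where
  "vars (V v) = {v}"
| "vars (S t) = vars t"

type_synonym eqn = "trm \<times> trm"

text \<open>Dependency graph of the atomic formula s = t: vertices are its variables, and two
  variables are adjacent iff they occur in a common atomic subformula (here: the formula itself).\<close>
definition dep_edges :: "eqn \<Rightarrow> (var \<times> var) set" where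
  "dep_edges e = {(u, w). u \<in> vars (fst e) \<union> vars (snd e) \<and> w \<in> vars (fst e) \<union> vars (snd e)}"

definition c_formula :: "eqn \<Rightarrow> bool" where
  "c_formula e \<longleftrightarrow> vars (fst e) \<union> vars (snd e) = {VX, VY}
     \<and> (\<forall>u \<in> vars (fst e) \<union> vars (snd e). \<forall>w \<in> vars (fst e) \<union> vars (snd e).
          (u, w) \<in> (dep_edges e)\<^sup>*)"

definition env :: "nat \<Rightarrow> nat \<Rightarrow> var \<Rightarrow> nat" where
  "env a b = (\<lambda>v. case v of VX \<Rightarrow> a | VY \<Rightarrow> b)"

definition just :: "nat \<Rightarrow> nat \<Rightarrow> eqn set" where
  "just a b = {e. c_formula e \<and> eval (env a b) (fst e) = eval (env a b) (snd e)}"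

definition just2 :: "nat \<Rightarrow> nat \<Rightarrow> nat \<Rightarrow> nat \<Rightarrow> eqn set" where
  "just2 a b c d = just a b \<inter> just c d"

definition trivial_eqs :: "eqn set" where
  "trivial_eqs = {e. \<forall>a b c d. e \<in> just2 a b c d}"

definition models_arrow :: "nat \<Rightarrow> nat \<Rightarrow> nat \<Rightarrow> nat \<Rightarrow> bool" where
  "models_arrow a b c d \<longleftrightarrow>
     (just a b \<union> just c d \<subseteq> trivial_eqs) \<or>
     ((\<exists>e \<in> just2 a b c d. e \<notin> trivial_eqs) \<and>
      (\<forall>d'. (trivial_eqs \<subset> just2 a b c d \<and> just2 a b c d \<subseteq> just2 a b c d')
          \<longrightarrow> (trivial_eqs \<subset> just2 a b c d' \<and> just2 a b c d' \<subseteq> just2 a b c d)))"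

definition models_analogy :: "nat \<Rightarrow> nat \<Rightarrow> nat \<Rightarrow> nat \<Rightarrow> bool" where
  "models_analogy a b c d \<longleftrightarrow>
     models_arrow a b c d \<and> models_arrow b a d c \<and> models_arrow c d a b \<and> models_arrow d c b a"

end

theory Submission
  imports Defs
begin

fun tv :: "trm \<Rightarrow> var" where
  "tv (V v) = v" | "tv (S t) = tv t"

fun dp :: "trm \<Rightarrow> nat" where
  "dp (V v) = 0" | "dp (S t) = Suc (dp t)"

lemma eval_tv: "eval \<rho> t = \<rho> (tv t) + dp t"
  by (induction t) auto

lemma vars_tv: "vars t = {tv t}"
  by (induction t) auto

fun itS :: "nat \<Rightarrow> trm \<Rightarrow> trm" where
  "itS 0 t = t" | "itS (Suc n) t = S (itS n t)"

lemma tv_itS: "tv (itS n t) = tv t" by (induction n) auto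
lemma dp_itS: "dp (itS n t) = n + dp t" by (induction n) auto

lemma cf_cases:
  assumes "c_formula e"
  shows "(tv (fst e) = VX \<and> tv (snd e) = VY) \<or> (tv (fst e) = VY \<and> tv (snd e) = VX)"
proof -
  have "{tv (fst e), tv (snd e)} = {VX, VY}" using assms unfolding c_formula_def vars_tv by auto
  then show ?thesis by (cases "tv (fst e)"; cases "tv (snd e)"; auto)
qed

lemma cf_intro: "tv s = VX \<Longrightarrow> tv t = VY \<Longrightarrow> c_formula (s, t)"
  unfolding c_formula_def dep_edges_def vars_tv by auto

lemma just_nonempty: "(itS b (V VX), itS a (V VY)) \<in> just a b"
  unfolding just_def by (auto simp: cf_intro tv_itS eval_tv dp_itS env_def)

lemma just_inter:
  assumes "e \<in> just a b" "e \<in> just c d"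
  shows "int a - int b = int c - int d"
proof -
  have cf: "c_formula e" using assms(1) by (simp add: just_def)
  have e1: "eval (env a b) (fst e) = eval (env a b) (snd e)"
    and e2: "eval (env c d) (fst e) = eval (env c d) (snd e)" using assms by (auto simp: just_def)
  from cf_cases[OF cf] show ?thesis
    using e1 e2 by (auto simp: eval_tv env_def)
qed

lemma just_eq:
  assumes "int a - int b = int c - int d"
  shows "just a b = just c d"
proof -
  have "eval (env a b) (fst e) = eval (env a b) (snd e) \<longleftrightarrow>
        eval (env c d) (fst e) = eval (env c d) (snd e)" if "c_formula e" for e
    using cf_cases[OF that] assms by (auto simp: eval_tv env_def)
  then show ?thesis unfolding just_def by blast
qed

lemma triv_empty: "trivial_eqs = {}"
proof -
  have "e \<notin> trivial_eqs" for e
  proof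
    assume "e \<in> trivial_eqs"
    then have "e \<in> just2 0 0 0 1" by (simp add: trivial_eqs_def)
    then show False using just_inter[of e 0 0 0 1] by (simp add: just2_def)
  qed
  then show ?thesis by blast
qed

lemma arrow_iff: "models_arrow a b c d \<longleftrightarrow> int a - int b = int c - int d"
proof
  assume h: "models_arrow a b c d"
  have "\<not> (just a b \<union> just c d \<subseteq> trivial_eqs)"
    proof
    assume "just a b \<union> just c d \<subseteq> trivial_eqs"
    then have "(itS b (V VX), itS a (V VY)) \<in> trivial_eqs" using just_nonempty[of b a] by blast
    then show False using triv_empty by simp
  qed
  then obtain e where "e \<in> just2 a b c d" using h unfolding models_arrow_def by blast
  then show "int a - int b = int c - int d" using just_inter[of e a b c d] by (simp add: just2_def)
next
  assume h: "int a - int b = int c - int d"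
  have j: "just2 a b c d = just a b" using just_eq[OF h] by (simp add: just2_def)
  have ne: "(itS b (V VX), itS a (V VY)) \<in> just2 a b c d" using j just_nonempty by simp
  have "\<forall>d'. (trivial_eqs \<subset> just2 a b c d \<and> just2 a b c d \<subseteq> just2 a b c d')
          \<longrightarrow> (trivial_eqs \<subset> just2 a b c d' \<and> just2 a b c d' \<subseteq> just2 a b c d)"
  proof (intro allI impI)
    fix d' assume a: "trivial_eqs \<subset> just2 a b c d \<and> just2 a b c d \<subseteq> just2 a b c d'"
    then have "(itS b (V VX), itS a (V VY)) \<in> just2 a b c d'" using ne by blast
    then have h': "int a - int b = int c - int d'" using just_inter[of "(itS b (V VX), itS a (V VY))" a b c d'] by (simp add: just2_def)
    then have "just2 a b c d' = just a b" using just_eq[OF h'] by (simp add: just2_def)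
    then show "trivial_eqs \<subset> just2 a b c d' \<and> just2 a b c d' \<subseteq> just2 a b c d" using a j by simp
  qed
  then show "models_arrow a b c d" using ne triv_empty unfolding models_arrow_def by blast
qed

theorem theorem13:
  fixes a b c d :: nat
  shows "models_analogy a b c d \<longleftrightarrow> int a - int b = int c - int d"
  unfolding models_analogy_def arrow_iff by linarith

end
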